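(* Let $n>2$, $V=\mathbb{F}_2^n$, and let $g\in\mathrm{Sym}(V)$ be such that $T\neq T^g$. If $W\le V$ is the subspace with $\sigma_W=T\cap T^g$, then $\dim(W)\le n-2$.
   Context: $T=\{\sigma_v: v\in V\}\le\mathrm{Sym}(V)$ is the group of translations $\sigma_v:x\mapsto x+v$; for a subset $W\subseteq V$, $\sigma_W=\{\sigma_w:w\in W\}$. $T^g=g^{-1}Tg$. Permutations act on the right. *)

theory Defs
  imports "HOL-Analysis.Analysis" "HOL-Library.Z2"
begin

definition transl :: "'a::plus \<Rightarrow> 'a \<Rightarrow> 'a" where
  "transl v = (\<lambda>x. x + v)"

definition transl_group :: "('a::plus \<Rightarrow> 'a) set" where
  "transl_group = range transl"

text \<open>Conjugate H^g = g^-1 H g with permutations acting on the right,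
  i.e. x^(g^-1 h g) = g (h (g^-1 x)).\<close>
definition conj_set :: "('a \<Rightarrow> 'a) \<Rightarrow> ('a \<Rightarrow> 'a) set \<Rightarrow> ('a \<Rightarrow> 'a) set" where
  "conj_set g H = (\<lambda>h. g \<circ> h \<circ> inv g) ` H"

end

theory Submission
  imports Defs
begin

lemma bitvec_minus: "(a::bit^'n) - b = a + b"
  by (simp add: vec_eq_iff)

lemma bitvec_dbl: "(a::bit^'n) + a = 0"
  by (simp add: vec_eq_iff)

lemma K:
  fixes W :: "(bit ^ 'n) set"
  assumes "vec.subspace W" "\<not> vec.dim W \<le> CARD('n) - 2" "CARD('n) > 2" "y \<notin> W"
  shows "v \<in> W \<or> v + y \<in> W"
proof -
  have sw: "vec.span W = W" using assms(1) by (simp add: vec.span_eq_iff)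
  have "vec.dim (insert y W) = vec.dim W + 1" using assms(4) sw vec.dim_insert[of y W] by metis
  hence "vec.dim (insert y W) \<ge> CARD('n)" using assms(2,3) by simp
  hence "vec.span (insert y W) = UNIV"
    by (metis vec.dim_eq_full vec.dim_subset_UNIV vec.span_UNIV vec_dim_card antisym vec.dim_le_card' vec.dim_span top_greatest)
  hence "v \<in> vec.span (insert y W)" by simp
  then obtain k where "v - k *s y \<in> W" using sw by (auto simp: vec.span_insert)
  moreover have "k = 0 \<or> k = 1" by (cases k) auto
  ultimately show ?thesis by (auto simp: bitvec_minus)
qed

theorem mainTheorem4:
  fixes g :: "bit ^ 'n \<Rightarrow> bit ^ 'n" and W :: "(bit ^ 'n) set"
  assumes "CARD('n) > 2"
    and "bij g"
    and "(transl_group :: (bit ^ 'n \<Rightarrow> bit ^ 'n) set) \<noteq> conj_set g transl_group"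
    and "vec.subspace W"
    and "transl ` W = transl_group \<inter> conj_set g transl_group"
  shows "vec.dim W \<le> CARD('n) - 2"
proof (rule ccontr)
  assume nd: "\<not> vec.dim W \<le> CARD('n) - 2"
  define TG where "TG = conj_set g (transl_group :: (bit ^ 'n \<Rightarrow> bit ^ 'n) set)"
  have ig: "\<And>x. inv g (g x) = x" using assms(2) by (simp add: bij_is_inj)
  have gi: "\<And>x. g (inv g x) = x" using assms(2) by (simp add: bij_is_surj surj_f_inv_f)
  have mem: "\<And>h. h \<in> TG \<longleftrightarrow> (\<exists>v. h = g \<circ> transl v \<circ> inv g)"
    unfolding TG_def conj_set_def transl_group_def by auto
  have comm: "h1 (h2 x) = h2 (h1 x)" if hh: "h1 \<in> TG" "h2 \<in> TG" for h1 h2 x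
  proof -
    obtain u v where "h1 = g \<circ> transl u \<circ> inv g" "h2 = g \<circ> transl v \<circ> inv g"
      using hh mem by blast
    thus ?thesis by (simp add: ig transl_def ac_simps)
  qed
  have invol: "h (h x) = x" if "h \<in> TG" for h x
  proof -
    have hh: "h \<in> TG" by fact
    obtain u where "h = g \<circ> transl u \<circ> inv g" using hh mem by blast
    thus ?thesis by (simp add: ig gi transl_def add.assoc bitvec_dbl)
  qed
  have tr: "\<exists>h\<in>TG. h x = y" for x y
  proof -
    let ?h = "g \<circ> transl (inv g x + inv g y) \<circ> inv g"
    have "?h \<in> TG" using mem by blast
    moreover have "?h x = y"
      by (simp add: gi transl_def add.assoc[symmetric] bitvec_dbl)
    ultimately show ?thesis by blast
  qed
  have WT: "transl w \<in> TG" if "w \<in> W" for w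
    using assms(5) that unfolding TG_def by blast
  have tx: "transl a b = b + a" for a b :: "bit^'n" by (simp add: transl_def)
  have allcomm: "h (transl v x) = transl v (h x)" if "h \<in> TG" for h v x
  proof (cases "v \<in> W")
    case True
    then show ?thesis using comm[OF that WT[OF True]] by simp
  next
    case False
    obtain h1 where h1: "h1 \<in> TG" "h1 0 = v" using tr by blast
    have "h1 = transl v"
    proof
      fix x
      show "h1 x = transl v x"
      proof (cases "x \<in> W")
        case True
        have "h1 x = h1 (transl x 0)" by (simp add: tx)
        also have "\<dots> = transl x (h1 0)" using comm[OF h1(1) WT[OF True]] by simp
        finally show ?thesis using h1 by (simp add: tx add.commute)
      next
        case xn: False
        then have w: "x + v \<in> W" using K[OF assms(4) nd assms(1) False] by blast
        have "v + (x + v) = x + (v + v)" by (simp only: ac_simps)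
        hence xe: "x = transl (x + v) v" unfolding tx bitvec_dbl add_0_right by simp
        have "h1 x = transl (x + v) (h1 v)"
          using comm[OF h1(1) WT[OF w], of v] xe by simp
        also have "h1 v = 0" using invol[OF h1(1), of 0] h1(2) by simp
        finally show ?thesis by (simp add: tx)
      qed
    qed
    then have "transl v \<in> TG" using h1 by simp
    then show ?thesis using comm[OF that] by simp
  qed
  have sub: "TG \<subseteq> transl_group"
  proof
    fix h assume h: "h \<in> TG"
    have "h = transl (h 0)"
    proof
      fix x
      have "h x = h (transl x 0)" by (simp add: tx)
      also have "\<dots> = transl x (h 0)" using allcomm[OF h] by simp
      finally show "h x = transl (h 0) x" by (simp add: tx add.commute)
    qed
    then show "h \<in> transl_group" unfolding transl_group_def by (metis rangeI)
  qed
  have WU: "W = UNIV"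
  proof (intro set_eqI iffI)
    fix x :: "bit^'n"
    obtain h where h: "h \<in> TG" "h 0 = x" using tr by blast
    then have "h \<in> transl ` W" using sub assms(5) unfolding TG_def by blast
    then obtain w where "w \<in> W" "h = transl w" by blast
    with h show "x \<in> W" by (simp add: tx)
  qed simp
  have "transl_group \<subseteq> TG" using assms(5) WU unfolding TG_def transl_group_def by blast
  with sub assms(3) show False unfolding TG_def by blast
qed

end
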